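(* Let $\kappa$ be a regular uncountable cardinal, $L=\{\lambda+1:\lambda<\kappa\text{ a limit ordinal}\}$, $W=\{\lambda<\kappa:\operatorname{cf}\lambda=\omega\}$, and let $I$ be the ideal generated by $I_\kappa\cup\{W\}$. Suppose $A\subseteq L\setminus\{\lambda+1:\lambda\in W\}$ and $B(A)=\{\lambda:\lambda+1\in A\}$ is stationary. Then $A\notin P(I)$.
   Context: An ideal on $\kappa$ is a family of subsets of $\kappa$ closed under subsets and finite unions, which is $<\kappa$-complete and contains all singletons; $I_\kappa=\{X\subseteq\kappa:|X|<\kappa\}$. For $A\subseteq\kappa$ and $X_\alpha\subseteq\kappa$, $\bigtriangledown_{\alpha\in A}X_\alpha=\{\xi<\kappa:\exists\alpha<\xi\,(\alpha\in A\wedge \xi\in X_\alpha)\}$. An ideal is pleasant if whenever $A$ and all $X_\alpha$ belong to it, so does $\bigtriangledown_{\alpha\in A}X_\alpha$. The pleasant closure $P(I)$ is built in stages: $P_0(I)=I$; $P_{\beta+1}(I)$ is the ideal generated by $P_\beta(I)$ together with all $\bigtriangledown_{\alpha\in T}X_\alpha$ with $T\in I$ and each $X_\alpha\in P_\beta(I)$; unions at limit stages; $P(I)=\bigcup_\beta P_\beta(I)$ (the smallest pleasant ideal containing $I$). *)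

theory Defs
  imports Main "HOL-Library.Equipollence" "HOL-Library.Countable_Set"
begin

text \<open>The cardinal kappa is modelled as a well-ordered type 'a: the ordinals below
kappa are the elements of 'a, and subsets of kappa are sets of type 'a set.\<close>

definition is_cardinal_type :: "'a::wellorder itself \<Rightarrow> bool" where
  "is_cardinal_type _ \<longleftrightarrow> (\<forall>a::'a. {..<a} \<prec> (UNIV::'a set))"

definition unbounded :: "'a::wellorder set \<Rightarrow> bool" where
  "unbounded X \<longleftrightarrow> (\<forall>a. \<exists>x\<in>X. a \<le> x)"

definition is_regular_type :: "'a::wellorder itself \<Rightarrow> bool" where
  "is_regular_type _ \<longleftrightarrow> (\<forall>X::'a set. unbounded X \<longrightarrow> X \<approx> (UNIV::'a set))"

definition succ_ord :: "'a::wellorder \<Rightarrow> 'a" where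
  "succ_ord l = (LEAST x. l < x)"

definition limit_ord :: "'a::wellorder \<Rightarrow> bool" where
  "limit_ord l \<longleftrightarrow> (\<exists>x. x < l) \<and> (\<forall>b<l. \<exists>c. b < c \<and> c < l)"

definition cf_omega :: "'a::wellorder \<Rightarrow> bool" where
  "cf_omega l \<longleftrightarrow> (\<exists>f::nat \<Rightarrow> 'a. strict_mono f \<and> (\<forall>n. f n < l) \<and> (\<forall>b<l. \<exists>n. b < f n))"

definition club :: "'a::wellorder set \<Rightarrow> bool" where
  "club C \<longleftrightarrow> unbounded C \<and>
     (\<forall>l. limit_ord l \<and> (\<forall>b<l. \<exists>c\<in>C. b \<le> c \<and> c < l) \<longrightarrow> l \<in> C)"

definition stationary :: "'a::wellorder set \<Rightarrow> bool" where
  "stationary S \<longleftrightarrow> (\<forall>C. club C \<longrightarrow> S \<inter> C \<noteq> {})"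

definition ideal_on :: "'a::wellorder set set \<Rightarrow> bool" where
  "ideal_on I \<longleftrightarrow> (\<forall>X\<in>I. \<forall>Y. Y \<subseteq> X \<longrightarrow> Y \<in> I) \<and> (\<forall>X\<in>I. \<forall>Y\<in>I. X \<union> Y \<in> I)
     \<and> (\<forall>F. F \<subseteq> I \<and> F \<prec> (UNIV::'a set) \<longrightarrow> \<Union>F \<in> I) \<and> (\<forall>x. {x} \<in> I)"

definition small_ideal :: "'a::wellorder set set" where
  "small_ideal = {X. X \<prec> (UNIV::'a set)}"

definition generated_ideal :: "'a::wellorder set set \<Rightarrow> 'a set set" where
  "generated_ideal G = \<Inter>{I. ideal_on I \<and> G \<subseteq> I}"

definition diag_union :: "'a::wellorder set \<Rightarrow> ('a \<Rightarrow> 'a set) \<Rightarrow> 'a set" where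
  "diag_union A X = {\<xi>. \<exists>\<alpha><\<xi>. \<alpha> \<in> A \<and> \<xi> \<in> X \<alpha>}"

definition pleasant :: "'a::wellorder set set \<Rightarrow> bool" where
  "pleasant I \<longleftrightarrow> (\<forall>A X. A \<in> I \<and> (\<forall>\<alpha>. X \<alpha> \<in> I) \<longrightarrow> diag_union A X \<in> I)"

text \<open>P(I) = union of the stages P_beta(I): the least family containing I that is closed
under the ideal operations and under diagonal unions indexed by T in I of members.\<close>
inductive_set pleasant_closure :: "'a::wellorder set set \<Rightarrow> 'a set set" for I where
  base: "X \<in> I \<Longrightarrow> X \<in> pleasant_closure I"
| diag: "T \<in> I \<Longrightarrow> (\<And>\<alpha>. \<alpha> \<in> T \<Longrightarrow> X \<alpha> \<in> pleasant_closure I) \<Longrightarrow> diag_union T X \<in> pleasant_closure I"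
| sub: "Y \<in> pleasant_closure I \<Longrightarrow> X \<subseteq> Y \<Longrightarrow> X \<in> pleasant_closure I"
| union: "F \<prec> (UNIV::'a set) \<Longrightarrow> (\<And>Y. Y \<in> F \<Longrightarrow> Y \<in> pleasant_closure I) \<Longrightarrow> \<Union>F \<in> pleasant_closure I"
| single: "{x} \<in> pleasant_closure I"

end

theory Submission
  imports Defs
begin

lemma small_bounded:
  assumes reg: "is_regular_type TYPE('a::wellorder)" and s: "(X::'a set) \<prec> (UNIV::'a set)"
  shows "\<exists>b. \<forall>x\<in>X. x < b"
proof -
  have "\<not> unbounded X" using reg s unfolding is_regular_type_def lesspoll_def by blast
  thus ?thesis unfolding unbounded_def by (auto simp: not_le)
qed

lemma bounded_small:
  assumes card: "is_cardinal_type TYPE('a::wellorder)" and "\<forall>x\<in>X. x < (b::'a)"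
  shows "X \<prec> (UNIV::'a set)"
proof -
  have "X \<lesssim> {..<b}" using assms(2) by (intro subset_imp_lepoll) auto
  moreover have "{..<b} \<prec> (UNIV::'a set)" using card unfolding is_cardinal_type_def by blast
  ultimately show ?thesis by (rule lesspoll_trans1)
qed

lemma no_max:
  assumes reg: "is_regular_type TYPE('a::wellorder)" and unc: "\<not> countable (UNIV::'a set)"
  shows "\<exists>b. (a::'a) < b"
proof (rule ccontr)
  assume "\<not> (\<exists>b. a < b)"
  hence "unbounded {a}" unfolding unbounded_def by (auto simp: not_less)
  hence "{a} \<approx> (UNIV::'a set)" using reg unfolding is_regular_type_def by blast
  hence "countable (UNIV::'a set)" using countable_eqpoll[of "{a}" "UNIV::'a set"] eqpoll_sym by blast
  thus False using unc by blast
qed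

lemma countable_bounded:
  assumes reg: "is_regular_type TYPE('a::wellorder)" and unc: "\<not> countable (UNIV::'a set)"
    and c: "countable (X::'a set)"
  shows "\<exists>b. \<forall>x\<in>X. x < b"
proof -
  have "\<not> unbounded X"
  proof
    assume "unbounded X"
    hence "X \<approx> (UNIV::'a set)" using reg unfolding is_regular_type_def by blast
    hence "countable (UNIV::'a set)" using countable_eqpoll[OF c] eqpoll_sym by blast
    thus False using unc by blast
  qed
  thus ?thesis unfolding unbounded_def by (auto simp: not_le)
qed

lemma succ_gt:
  assumes "\<exists>b. (a::'a::wellorder) < b" shows "a < succ_ord a"
  using assms unfolding succ_ord_def by (metis LeastI)

lemma succ_le: "(a::'a::wellorder) < y \<Longrightarrow> succ_ord a \<le> y"
  unfolding succ_ord_def by (rule Least_le)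

lemma succ_not_limit:
  assumes "\<exists>b. (a::'a::wellorder) < b" shows "\<not> limit_ord (succ_ord a)"
proof
  assume "limit_ord (succ_ord a)"
  then obtain c where "a < c" "c < succ_ord a" using succ_gt[OF assms] unfolding limit_ord_def by blast
  thus False using succ_le[of a c] by simp
qed

lemma succ_inj:
  assumes nm: "\<And>a::'a::wellorder. \<exists>b. a < b" and "succ_ord (x::'a) = succ_ord y" shows "x = y"
proof (rule ccontr)
  assume "x \<noteq> y"
  hence "x < y \<or> y < x" by auto
  thus False using succ_le succ_gt[OF nm] assms(2) by (metis leD)
qed

lemma club_tail: "club {x::'a::wellorder. b \<le> x}"
  unfolding club_def unbounded_def
proof (intro conjI allI impI)
  fix a show "\<exists>x\<in>{x. b \<le> x}. a \<le> x" by (intro bexI[of _ "max a b"]) auto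
next
  fix l assume h: "limit_ord l \<and> (\<forall>ba<l. \<exists>c\<in>{x. b \<le> x}. ba \<le> c \<and> c < l)"
  obtain x where "x < l" using h unfolding limit_ord_def by blast
  then obtain c where "c \<in> {x. b \<le> x}" "c < l" using h by blast
  thus "l \<in> {x. b \<le> x}" by auto
qed

lemma club_UNIV: "club (UNIV::'a::wellorder set)"
  unfolding club_def unbounded_def by auto

lemma club_inter_tail:
  assumes "club C" shows "club (C \<inter> {x::'a::wellorder. b \<le> x})"
  unfolding club_def
proof (intro conjI allI impI)
  show "unbounded (C \<inter> {x. b \<le> x})"
    unfolding unbounded_def
  proof
    fix a
    obtain x where "x \<in> C" "max a b \<le> x" using assms unfolding club_def unbounded_def by blast
    thus "\<exists>x\<in>C \<inter> {x. b \<le> x}. a \<le> x" by auto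
  qed
next
  fix l assume h: "limit_ord l \<and> (\<forall>ba<l. \<exists>c\<in>C \<inter> {x. b \<le> x}. ba \<le> c \<and> c < l)"
  hence "l \<in> C" using assms unfolding club_def by blast
  moreover have "b \<le> l"
  proof -
    obtain x where "x < l" using h unfolding limit_ord_def by blast
    then obtain c where "c \<in> C \<inter> {x. b \<le> x}" "c < l" using h by blast
    thus ?thesis by auto
  qed
  ultimately show "l \<in> C \<inter> {x. b \<le> x}" by blast
qed


lemma diag_club:
  assumes card: "is_cardinal_type TYPE('a::wellorder)" and reg: "is_regular_type TYPE('a)"
    and unc: "\<not> countable (UNIV::'a set)" and cl: "\<And>\<alpha>. club (C \<alpha> :: 'a set)"
  shows "club {\<xi>. \<forall>\<alpha><\<xi>. \<xi> \<in> C \<alpha>}"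
  unfolding club_def unbounded_def
proof (intro conjI allI impI)
  have nm: "\<And>a::'a. \<exists>b. a < b" using no_max[OF reg unc] by blast
  have step: "\<exists>y. x < y \<and> (\<forall>\<alpha><x. \<exists>c\<in>C \<alpha>. x < c \<and> c < y)" for x :: 'a
  proof -
    have "\<forall>\<alpha>. \<exists>c\<in>C \<alpha>. succ_ord x \<le> c" using cl unfolding club_def unbounded_def by blast
    then obtain g where g: "\<And>\<alpha>. g \<alpha> \<in> C \<alpha> \<and> succ_ord x \<le> g \<alpha>" by metis
    have "g ` {..<x} \<prec> (UNIV::'a set)"
      using lesspoll_trans1[OF image_lepoll] card unfolding is_cardinal_type_def by blast
    then obtain b where b: "\<forall>c\<in>g ` {..<x}. c < b" using small_bounded[OF reg] by blast
    have sx: "x < succ_ord x" using succ_gt nm by blast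
    show ?thesis
    proof (intro exI[of _ "max b (succ_ord x)"] conjI allI impI)
      show "x < max b (succ_ord x)" using sx by (simp add: less_max_iff_disj)
      fix \<alpha> assume "\<alpha> < x"
      hence "g \<alpha> < b" using b by auto
      thus "\<exists>c\<in>C \<alpha>. x < c \<and> c < max b (succ_ord x)" using g[of \<alpha>] sx
        by (intro bexI[of _ "g \<alpha>"]) (auto simp: less_max_iff_disj)
    qed
  qed
  then obtain nxt where nxt: "\<And>x. x < nxt x \<and> (\<forall>\<alpha><x. \<exists>c\<in>C \<alpha>. x < c \<and> c < nxt x)" by metis
  fix a :: 'a
  define s where "s n = (nxt ^^ n) a" for n
  have sS: "s (Suc n) = nxt (s n)" for n unfolding s_def by simp
  have smono: "strict_mono s" unfolding strict_mono_Suc_iff by (simp add: sS nxt)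
  obtain B where B: "\<forall>x\<in>range s. x < B" using countable_bounded[OF reg unc, of "range s"] by blast
  define l where "l = (LEAST y. \<forall>n. s n \<le> y)"
  have ub: "\<forall>n. s n \<le> l" 
  proof -
    have "\<forall>n. s n \<le> B" using B by (auto intro: less_imp_le)
    thus ?thesis unfolding l_def by (rule LeastI)
  qed
  have slt: "s n < l" for n 
  proof -
    have "s n < s (Suc n)" using smono by (simp add: strict_mono_Suc_iff)
    thus ?thesis using ub[rule_format, of "Suc n"] by simp
  qed
  have below: "\<exists>n. b < s n" if "b < l" for b
  proof (rule ccontr)
    assume "\<not> ?thesis"
    hence "\<forall>n. s n \<le> b" by (auto simp: not_less)
    hence "l \<le> b" unfolding l_def by (rule Least_le)
    thus False using that by simp
  qed
  have lim: "limit_ord l" unfolding limit_ord_def using slt below by blast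
  have "l \<in> {\<xi>. \<forall>\<alpha><\<xi>. \<xi> \<in> C \<alpha>}"
  proof (clarify)
    fix \<alpha> assume "\<alpha> < l"
    then obtain m where m: "\<alpha> < s m" using below by blast
    have "\<forall>b<l. \<exists>c\<in>C \<alpha>. b \<le> c \<and> c < l"
    proof (intro allI impI)
      fix b assume "b < l"
      then obtain n where n: "b < s n" using below by blast
      define k where "k = max n m"
      have "s n \<le> s k" "s m \<le> s k" unfolding k_def using smono by (auto simp: strict_mono_less_eq)
      hence "\<alpha> < s k" using m by simp
      then obtain c where "c \<in> C \<alpha>" "s k < c" "c < s (Suc k)" using nxt[of "s k"] sS by auto
      thus "\<exists>c\<in>C \<alpha>. b \<le> c \<and> c < l" using n \<open>s n \<le> s k\<close> slt[of "Suc k"]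
        by (intro bexI[of _ c]) auto
    qed
    thus "l \<in> C \<alpha>" using cl[of \<alpha>] lim unfolding club_def by blast
  qed
  moreover have "a \<le> l" using ub[rule_format, of 0] by (simp add: s_def)
  ultimately show "\<exists>x\<in>{\<xi>. \<forall>\<alpha><\<xi>. \<xi> \<in> C \<alpha>}. a \<le> x" by blast
next
  fix l assume h: "limit_ord l \<and> (\<forall>b<l. \<exists>c\<in>{\<xi>. \<forall>\<alpha><\<xi>. \<xi> \<in> C \<alpha>}. b \<le> c \<and> c < l)"
  show "l \<in> {\<xi>. \<forall>\<alpha><\<xi>. \<xi> \<in> C \<alpha>}"
  proof (clarify)
    fix \<alpha> assume al: "\<alpha> < l"
    obtain e where e: "\<alpha> < e" "e < l" using h al unfolding limit_ord_def by blast
    have "\<forall>b<l. \<exists>c\<in>C \<alpha>. b \<le> c \<and> c < l"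
    proof (intro allI impI)
      fix b assume "b < l"
      hence "max b e < l" using e by simp
      then obtain c where c: "\<forall>\<beta><c. c \<in> C \<beta>" "max b e \<le> c" "c < l" using h by blast
      hence "\<alpha> < c" using e(1) c(2) by (simp add: order.strict_trans2)
      thus "\<exists>c\<in>C \<alpha>. b \<le> c \<and> c < l" using c by auto
    qed
    thus "l \<in> C \<alpha>" using cl[of \<alpha>] h unfolding club_def by blast
  qed
qed


definition NS :: "'a::wellorder set \<Rightarrow> bool" where
  "NS X \<longleftrightarrow> (\<exists>C. club C \<and> X \<inter> C = {})"

lemma NS_bounded: "X \<subseteq> {x. x < (b::'a::wellorder)} \<Longrightarrow> NS X"
  unfolding NS_def using club_tail[of b] by (intro exI[of _ "{x. b \<le> x}"]) auto

lemma NS_mono: "NS Y \<Longrightarrow> X \<subseteq> Y \<Longrightarrow> NS X"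
  unfolding NS_def by blast

lemma NS_Un_bounded: "NS S \<Longrightarrow> NS (S \<union> {x. x < (b::'a::wellorder)})"
proof -
  assume "NS S"
  then obtain C where C: "club C" "S \<inter> C = {}" unfolding NS_def by blast
  have "club (C \<inter> {x. b \<le> x})" using club_inter_tail[OF C(1)] .
  moreover have "(S \<union> {x. x < b}) \<inter> (C \<inter> {x. b \<le> x}) = {}" using C(2) by auto
  ultimately show ?thesis unfolding NS_def by blast
qed

lemma NS_diag:
  assumes card: "is_cardinal_type TYPE('a::wellorder)" and reg: "is_regular_type TYPE('a)"
    and unc: "\<not> countable (UNIV::'a set)" and ns: "\<And>\<alpha>. \<alpha> \<in> T \<Longrightarrow> NS (N \<alpha> :: 'a set)"
  shows "NS {l. \<exists>\<alpha><l. \<alpha> \<in> T \<and> l \<in> N \<alpha>}"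
proof -
  have "\<forall>\<alpha>. \<exists>C. club C \<and> (\<alpha> \<in> T \<longrightarrow> N \<alpha> \<inter> C = {})"
    using ns club_UNIV unfolding NS_def by metis
  then obtain C where C: "\<And>\<alpha>. club (C \<alpha>) \<and> (\<alpha> \<in> T \<longrightarrow> N \<alpha> \<inter> C \<alpha> = {})" by metis
  have "club {\<xi>. \<forall>\<alpha><\<xi>. \<xi> \<in> C \<alpha>}" using diag_club[OF card reg unc] C by blast
  moreover have "{l. \<exists>\<alpha><l. \<alpha> \<in> T \<and> l \<in> N \<alpha>} \<inter> {\<xi>. \<forall>\<alpha><\<xi>. \<xi> \<in> C \<alpha>} = {}"
    using C by blast
  ultimately show ?thesis unfolding NS_def by blast
qed

lemma NS_Union:
  assumes card: "is_cardinal_type TYPE('a::wellorder)" and reg: "is_regular_type TYPE('a)"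
    and unc: "\<not> countable (UNIV::'a set)" and F: "F \<prec> (UNIV::'a set)"
    and ns: "\<And>Y. Y \<in> F \<Longrightarrow> NS (Y :: 'a set)"
  shows "NS (\<Union>F)"
proof -
  have "\<forall>Y. \<exists>C. club C \<and> (Y \<in> F \<longrightarrow> Y \<inter> C = {})"
    using ns club_UNIV unfolding NS_def by metis
  then obtain C where C: "\<And>Y. club (C Y) \<and> (Y \<in> F \<longrightarrow> Y \<inter> C Y = {})" by metis
  obtain f where f: "inj_on f F" "f ` F \<subseteq> (UNIV::'a set)"
    using F unfolding lesspoll_def lepoll_def by blast
  have "f ` F \<prec> (UNIV::'a set)" using F f(1) by simp
  then obtain b where b: "\<forall>x\<in>f ` F. x < b" using small_bounded[OF reg] by blast
  define D where "D \<alpha> = (if \<alpha> \<in> f ` F then C (the_inv_into F f \<alpha>) else UNIV)" for \<alpha>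
  have "club (D \<alpha>)" for \<alpha> unfolding D_def using C club_UNIV by auto
  hence cl: "club ({\<xi>. \<forall>\<alpha><\<xi>. \<xi> \<in> D \<alpha>} \<inter> {x. b \<le> x})"
    using diag_club[OF card reg unc] club_inter_tail by blast
  have "\<Union>F \<inter> ({\<xi>. \<forall>\<alpha><\<xi>. \<xi> \<in> D \<alpha>} \<inter> {x. b \<le> x}) = {}"
  proof (rule ccontr)
    assume "\<not> ?thesis"
    then obtain Y x where Y: "Y \<in> F" "x \<in> Y" "\<forall>\<alpha><x. x \<in> D \<alpha>" "b \<le> x" by blast
    have "f Y < x" using b Y by (meson image_eqI order.strict_trans2)
    hence "x \<in> D (f Y)" using Y by blast
    hence "x \<in> C Y" unfolding D_def using Y f(1) by (simp add: the_inv_into_f_f)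
    thus False using C Y by blast
  qed
  thus ?thesis using cl unfolding NS_def by blast
qed


lemma gen_sub:
  assumes card: "is_cardinal_type TYPE('a::wellorder)" and reg: "is_regular_type TYPE('a)"
    and unc: "\<not> countable (UNIV::'a set)"
  shows "generated_ideal (small_ideal \<union> {W}) \<subseteq> {X. \<exists>b. X \<subseteq> W \<union> {x::'a. x < b}}"
proof -
  let ?J = "{X. \<exists>b. X \<subseteq> W \<union> {x::'a. x < b}}"
  have nm: "\<And>a::'a. \<exists>b. a < b" using no_max[OF reg unc] by blast
  have "ideal_on ?J" unfolding ideal_on_def
  proof (intro conjI ballI allI impI)
    fix X Y assume "X \<in> ?J" "Y \<subseteq> X" thus "Y \<in> ?J" by blast
  next
    fix X Y assume "X \<in> ?J" "Y \<in> ?J"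
    then obtain b c where "X \<subseteq> W \<union> {x. x < b}" "Y \<subseteq> W \<union> {x. x < c}" by blast
    hence "X \<union> Y \<subseteq> W \<union> {x. x < max b c}" by (auto simp: less_max_iff_disj)
    thus "X \<union> Y \<in> ?J" by blast
  next
    fix F assume h: "F \<subseteq> ?J \<and> F \<prec> (UNIV::'a set)"
    hence "\<forall>Y\<in>F. \<exists>b. Y \<subseteq> W \<union> {x. x < b}" by blast
    then obtain g where g: "\<And>Y. Y \<in> F \<Longrightarrow> Y \<subseteq> W \<union> {x. x < g Y}" by metis
    have "g ` F \<prec> (UNIV::'a set)" using lesspoll_trans1[OF image_lepoll] h by blast
    then obtain b where b: "\<forall>x\<in>g ` F. x < b" using small_bounded[OF reg] by blast
    have "\<Union>F \<subseteq> W \<union> {x. x < b}"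
    proof
      fix x assume "x \<in> \<Union>F"
      then obtain Y where "Y \<in> F" "x \<in> Y" by blast
      thus "x \<in> W \<union> {x. x < b}" using g[of Y] b by fastforce
    qed
    thus "\<Union>F \<in> ?J" by blast
  next
    fix x :: 'a
    obtain b where "x < b" using nm by blast
    hence "{x} \<subseteq> W \<union> {x. x < b}" by auto
    thus "{x} \<in> ?J" by blast
  qed
  moreover have "small_ideal \<union> {W} \<subseteq> ?J"
  proof
    fix X assume "X \<in> small_ideal \<union> {W}"
    thus "X \<in> ?J"
    proof
      assume "X \<in> small_ideal"
      then obtain b where "\<forall>x\<in>X. x < b" using small_bounded[OF reg] unfolding small_ideal_def by blast
      thus ?thesis by blast
    qed auto
  qed
  ultimately show ?thesis unfolding generated_ideal_def by blast
qed

lemma invariant: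
  assumes card: "is_cardinal_type TYPE('a::wellorder)" and reg: "is_regular_type TYPE('a)"
    and unc: "\<not> countable (UNIV::'a set)"
    and X: "X \<in> pleasant_closure (generated_ideal (small_ideal \<union> {{l::'a. limit_ord l \<and> cf_omega l}}))"
  shows "NS {l::'a. succ_ord l \<in> X \<and> l \<notin> {l::'a. limit_ord l \<and> cf_omega l}}"
proof -
  let ?W = "{l::'a. limit_ord l \<and> cf_omega l}"
  have nm: "\<And>a::'a. \<exists>b. a < b" using no_max[OF reg unc] by blast
  show ?thesis using X
proof induction
  case (base X)
  then obtain b where b: "X \<subseteq> ?W \<union> {x. x < b}" using gen_sub[OF card reg unc] by blast
  have "l < b" if "succ_ord l \<in> X" for l
  proof -
    have "succ_ord l \<notin> ?W" using succ_not_limit[OF nm] by blast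
    hence "succ_ord l < b" using b that by blast
    thus "l < b" using succ_gt[OF nm] by (meson order.strict_trans)
  qed
  thus ?case by (intro NS_bounded[of _ b]) blast
next
  case (diag T X)
  then obtain b where b: "T \<subseteq> ?W \<union> {x. x < b}" using gen_sub[OF card reg unc] by blast
  have ns: "NS {l. \<exists>\<alpha><l. \<alpha> \<in> T \<and> l \<in> {l. succ_ord l \<in> X \<alpha> \<and> l \<notin> ?W}}"
    using NS_diag[OF card reg unc, of T "\<lambda>\<alpha>. {l. succ_ord l \<in> X \<alpha> \<and> l \<notin> ?W}"] diag.IH by blast
  have "{l. succ_ord l \<in> diag_union T X \<and> l \<notin> ?W} \<subseteq>
     {l. \<exists>\<alpha><l. \<alpha> \<in> T \<and> l \<in> {l. succ_ord l \<in> X \<alpha> \<and> l \<notin> ?W}} \<union> {x. x < b}"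
  proof
    fix l assume "l \<in> {l. succ_ord l \<in> diag_union T X \<and> l \<notin> ?W}"
    hence h: "succ_ord l \<in> diag_union T X" "l \<notin> ?W" by auto
    show "l \<in> {l. \<exists>\<alpha><l. \<alpha> \<in> T \<and> l \<in> {l. succ_ord l \<in> X \<alpha> \<and> l \<notin> ?W}} \<union> {x. x < b}"
    proof (cases "l < b")
      case False
      obtain \<alpha> where a: "\<alpha> < succ_ord l" "\<alpha> \<in> T" "succ_ord l \<in> X \<alpha>"
        using h unfolding diag_union_def by blast
      have "\<not> l < \<alpha>" using a(1) succ_le[of l \<alpha>] by (meson leD)
      moreover have "\<alpha> \<noteq> l" using a(2) h(2) False b by blast
      ultimately have "\<alpha> < l" by simp
      thus ?thesis using a h by blast
    qed simp
  qed
  thus ?case using NS_Un_bounded[OF ns, of b] NS_mono by blast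
next
  case (sub Y X)
  then show ?case by (auto intro: NS_mono)
next
  case (union F)
  let ?N = "\<lambda>Y. {l. succ_ord l \<in> Y \<and> l \<notin> ?W}"
  have "?N ` F \<prec> (UNIV::'a set)" using lesspoll_trans1[OF image_lepoll] union(1) by blast
  hence "NS (\<Union>(?N ` F))" by (rule NS_Union[OF card reg unc]) (use union in blast)
  moreover have "?N (\<Union>F) = \<Union>(?N ` F)" by blast
  ultimately show ?case by simp
next
  case (single x)
  show ?case
    by (rule NS_bounded[of _ x]) (use succ_gt[OF nm] in auto)
qed
qed

theorem theorem3p13:
  fixes A :: "'a::wellorder set"
  assumes card: "is_cardinal_type TYPE('a)"
    and reg: "is_regular_type TYPE('a)"
    and uncountable: "\<not> countable (UNIV::'a set)"
    and subA: "A \<subseteq> {succ_ord l | l. limit_ord l} - {succ_ord l | l. limit_ord l \<and> cf_omega l}"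
    and stat: "stationary {l. succ_ord l \<in> A}"
  shows "A \<notin> pleasant_closure (generated_ideal (small_ideal \<union> {{l. limit_ord l \<and> cf_omega l}}))"
proof
  assume "A \<in> pleasant_closure (generated_ideal (small_ideal \<union> {{l. limit_ord l \<and> cf_omega l}}))"
  hence "NS {l::'a. succ_ord l \<in> A \<and> l \<notin> {l::'a. limit_ord l \<and> cf_omega l}}"
    by (rule invariant[OF card reg uncountable])
  moreover have "{l::'a. succ_ord l \<in> A \<and> l \<notin> {l::'a. limit_ord l \<and> cf_omega l}} = {l. succ_ord l \<in> A}"
    using subA by blast
  ultimately show False using stat unfolding NS_def stationary_def by auto
qed

end
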